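(* Let $\Omega\subset\mathbb{R}^2$ be a bounded convex set with non-empty interior which has the same symmetry axes as an equilateral triangle (i.e. it is symmetric with respect to three lines through a common point forming pairwise angles $\pi/3$). Then there exist $a\in[0,1/3]$ and a map $g$ which is a composition of a rigid motion and a homothety such that $g(\Omega)\in\mathcal C_a$.
   Context: Let $T$ be the equilateral triangle with vertices $(\pm1/2,0)$ and $(0,\sqrt3/2)$; its symmetry axes are the lines $x=0$, $-x+\sqrt3 y=1/2$, $x+\sqrt3y=1/2$. For $a\in[0,1/2]$, let $\hat T_a$ be the equilateral triangle bounded by the lines $y=\frac{\sqrt3}{2}(1-a)$ and $y=\pm\sqrt3x-\sqrt3(\frac12-a)$. Let $\Omega_a=\hat T_a\cap T$, the hexagon with vertices $(\pm\frac a2,\frac{\sqrt3}{2}(1-a))$, $(\pm(\frac12-a),0)$, $(\pm\frac12(1-a),\frac{\sqrt3}{2}a)$. Let $H_a$ be the hexagon with vertices $(0,0)$, $(\pm(\frac12-\frac34a),\frac{\sqrt3}{4}a)$, $(\pm\frac14,\frac{\sqrt3}4)$, $(0,\frac{\sqrt3}{2}(1-a))$ (the midpoints of the sides of $\Omega_a$). For $a\in[0,1/2]$, $\mathcal C_a$ is the class of convex sets $\Omega$ symmetric with respect to the three symmetry axes of $T$ and satisfying $H_a\subset\overline\Omega\subset\overline{\Omega_a}$ (sets identified with their closures). *)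

theory Defs
  imports "HOL-Analysis.Analysis"
begin

text \<open>The plane R^2 is identified with the complex numbers: (x,y) = x + i y.\<close>

definition pt :: "real \<Rightarrow> real \<Rightarrow> complex" where
  "pt x y = Complex x y"

text \<open>Reflection across the line {(x,y). al*x + be*y = ga} (with (al,be) \<noteq> (0,0)).\<close>
definition refl_eq :: "real \<Rightarrow> real \<Rightarrow> real \<Rightarrow> complex \<Rightarrow> complex" where
  "refl_eq al be ga z =
     z - of_real (2 * (al * Re z + be * Im z - ga) / (al\<^sup>2 + be\<^sup>2)) * Complex al be"

text \<open>Reflection across the line through p with direction angle th.\<close>
definition refl_dir :: "complex \<Rightarrow> real \<Rightarrow> complex \<Rightarrow> complex" where
  "refl_dir p th z = p + cis (2 * th) * cnj (z - p)"

definition symmetric_wrt :: "(complex \<Rightarrow> complex) \<Rightarrow> complex set \<Rightarrow> bool" where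
  "symmetric_wrt f S \<longleftrightarrow> f ` S = S"

definition triangle_symmetric :: "complex set \<Rightarrow> bool" where
  "triangle_symmetric S \<longleftrightarrow>
     (\<exists>p th. symmetric_wrt (refl_dir p th) S \<and>
             symmetric_wrt (refl_dir p (th + pi/3)) S \<and>
             symmetric_wrt (refl_dir p (th + 2*pi/3)) S)"

definition T_symmetric :: "complex set \<Rightarrow> bool" where
  "T_symmetric S \<longleftrightarrow>
     symmetric_wrt (refl_eq 1 0 0) S \<and>
     symmetric_wrt (refl_eq (-1) (sqrt 3) (1/2)) S \<and>
     symmetric_wrt (refl_eq 1 (sqrt 3) (1/2)) S"

text \<open>Closed hexagon Omega_a = T_hat_a \<inter> T (closure), as the convex hull of its vertices.\<close>
definition Omega_hex :: "real \<Rightarrow> complex set" where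
  "Omega_hex a = convex hull
     {pt (a/2) (sqrt 3 / 2 * (1 - a)), pt (-(a/2)) (sqrt 3 / 2 * (1 - a)),
      pt (1/2 - a) 0, pt (-(1/2 - a)) 0,
      pt ((1 - a)/2) (sqrt 3 / 2 * a), pt (-((1 - a)/2)) (sqrt 3 / 2 * a)}"

definition H_hex :: "real \<Rightarrow> complex set" where
  "H_hex a = convex hull
     {pt 0 0, pt (1/2 - 3/4 * a) (sqrt 3 / 4 * a), pt (-(1/2 - 3/4 * a)) (sqrt 3 / 4 * a),
      pt (1/4) (sqrt 3 / 4), pt (-(1/4)) (sqrt 3 / 4), pt 0 (sqrt 3 / 2 * (1 - a))}"

definition class_C :: "real \<Rightarrow> complex set set" where
  "class_C a = {S. convex S \<and> T_symmetric S \<and> H_hex a \<subseteq> closure S \<and> closure S \<subseteq> Omega_hex a}"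

definition rigid_motion :: "(complex \<Rightarrow> complex) \<Rightarrow> bool" where
  "rigid_motion f \<longleftrightarrow> (\<forall>x y. dist (f x) (f y) = dist x y)"

definition homothety :: "(complex \<Rightarrow> complex) \<Rightarrow> bool" where
  "homothety h \<longleftrightarrow> (\<exists>c (lam::real). lam \<noteq> 0 \<and> (\<forall>z. h z = c + of_real lam * (z - c)))"

end

theory Submission
  imports Defs
begin

lemma s3sq: "sqrt 3 * sqrt 3 = (3::real)" by simp
lemma s3pos: "sqrt 3 > (0::real)" by simp
lemma s3sq2: "sqrt 3 * (sqrt 3 * x) = (3::real) * x" by (simp add: mult.assoc[symmetric])

abbreviation "R1 \<equiv> refl_eq 1 0 0"
abbreviation "R2 \<equiv> refl_eq (-1) (sqrt 3) (1/2)"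
abbreviation "R3 \<equiv> refl_eq 1 (sqrt 3) (1/2)"

lemma R1_Re[simp]: "Re (R1 z) = - Re z" and R1_Im[simp]: "Im (R1 z) = Im z"
  by (simp_all add: refl_eq_def)
lemma R2_Re[simp]: "Re (R2 z) = Re z / 2 + sqrt 3 * Im z / 2 - 1/4"
  by (simp add: refl_eq_def field_simps)
lemma R2_Im[simp]: "Im (R2 z) = - Im z / 2 + sqrt 3 * Re z / 2 + sqrt 3 / 4"
  by (simp add: refl_eq_def field_simps)
lemma R3_Re[simp]: "Re (R3 z) = Re z / 2 - sqrt 3 * Im z / 2 + 1/4"
  by (simp add: refl_eq_def field_simps)
lemma R3_Im[simp]: "Im (R3 z) = - Im z / 2 - sqrt 3 * Re z / 2 + sqrt 3 / 4"
  by (simp add: refl_eq_def field_simps)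

definition c0 :: complex where "c0 = Complex 0 (sqrt 3 / 6)"
definition g1 :: "complex \<Rightarrow> real" where "g1 z = 1/6 - Im z / sqrt 3"
definition M :: "real \<Rightarrow> complex \<Rightarrow> complex" where "M m z = c0 + of_real m * (z - c0)"

lemma g1_R1: "g1 (R1 z) = g1 z" by (simp add: g1_def)
lemma g1_R3: "g1 (R3 z) = (Re z + Im z / sqrt 3)/2 - 1/12"
  by (simp add: g1_def field_simps)
lemma g1_R2: "g1 (R2 z) = (Im z / sqrt 3 - Re z)/2 - 1/12"
  by (simp add: g1_def field_simps)
lemma g1_M: "g1 (M m z) = m * g1 z"
  by (simp add: g1_def M_def c0_def field_simps)

lemma M_R1: "R1 (M m z) = M m (R1 z)"
  by (simp add: complex_eq_iff M_def c0_def field_simps s3sq2)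
lemma M_R2: "R2 (M m z) = M m (R2 z)"
  by (simp add: complex_eq_iff M_def c0_def field_simps s3sq2)
lemma M_R3: "R3 (M m z) = M m (R3 z)"
  by (simp add: complex_eq_iff M_def c0_def field_simps s3sq2)

lemma refl_dir_R: "refl_dir c0 (pi/6) = R2" "refl_dir c0 (pi/2) = R1" "refl_dir c0 (5*pi/6) = R3"
proof -
  have a: "cis (2*(pi/6)) = Complex (1/2) (sqrt 3 / 2)"
    using cos_60 sin_60 by (simp add: complex_eq_iff)
  have b: "cis (2*(pi/2)) = -1" by (simp add: complex_eq_iff)
  have e: "2*(5*pi/6) = -(pi/3) + 2*pi" by simp
  have "cis (2*(5*pi/6)) = cis (-(pi/3)) * cis (2*pi)" by (simp only: e cis_mult)
  also have "\<dots> = Complex (1/2) (- sqrt 3 / 2)"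
    by (simp add: complex_eq_iff cos_60 sin_60)
  finally have c: "cis (2*(5*pi/6)) = Complex (1/2) (- sqrt 3 / 2)" .
  show "refl_dir c0 (pi/6) = R2"
    by (rule ext) (simp only: refl_dir_def a, simp add: c0_def complex_eq_iff field_simps s3sq2)
  show "refl_dir c0 (pi/2) = R1"
    by (rule ext) (simp only: refl_dir_def b, simp add: c0_def complex_eq_iff field_simps s3sq2)
  show "refl_dir c0 (5*pi/6) = R3"
    by (rule ext) (simp only: refl_dir_def c, simp add: c0_def complex_eq_iff field_simps s3sq2)
qed

lemma cont_refl: "al^2+be^2 \<noteq> 0 \<Longrightarrow> continuous_on A (refl_eq al be ga)"
  unfolding refl_eq_def by (intro continuous_intros) auto
lemma cont_R: "continuous_on A R1" "continuous_on A R2" "continuous_on A R3"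
  by (rule cont_refl; simp)+

lemma sym_closure:
  assumes "continuous_on (closure S) f" "f ` S = S"
  shows "f ` closure S \<subseteq> closure S"
  using image_closure_subset[OF assms(1) closed_closure] assms(2) closure_subset by blast

lemma image_comm:
  assumes "\<And>z. f (g z) = g (f z)" "f ` S = S"
  shows "f ` (g ` S) = g ` S"
proof -
  have "f ` (g ` S) = g ` (f ` S)" using assms(1) by (simp add: image_image)
  then show ?thesis using assms(2) by simp
qed

lemma T_symmetric_M: "T_symmetric S \<Longrightarrow> T_symmetric (M m ` S)"
  unfolding T_symmetric_def symmetric_wrt_def
  using image_comm[of R1 "M m" S] image_comm[of R2 "M m" S] image_comm[of R3 "M m" S]
    M_R1 M_R2 M_R3 by simp

lemma convex_affine_image:
  fixes f :: "'a::real_vector \<Rightarrow> 'b::real_vector"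
  assumes "convex S" "\<And>x y (u::real). f ((1-u) *\<^sub>R x + u *\<^sub>R y) = (1-u) *\<^sub>R f x + u *\<^sub>R f y"
  shows "convex (f ` S)"
  unfolding convex_alt
proof (intro ballI allI impI)
  fix x y and u::real assume "x \<in> f ` S" "y \<in> f ` S" and u: "0 \<le> u \<and> u \<le> 1"
  then obtain x' y' where "x' \<in> S" "y' \<in> S" "x = f x'" "y = f y'" by blast
  then show "(1 - u) *\<^sub>R x + u *\<^sub>R y \<in> f ` S"
    using assms u unfolding convex_alt by (metis image_eqI)
qed

lemma convex_lin: "convex (S::complex set) \<Longrightarrow> convex ((\<lambda>z. c + k * (z - d)) ` S)"
  by (rule convex_affine_image) (simp_all add: scaleR_conv_of_real algebra_simps)

lemma bounded_lin: "bounded (S::complex set) \<Longrightarrow> bounded ((\<lambda>z. c + k * (z - d)) ` S)"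
proof -
  assume "bounded S"
  then obtain B where B: "\<forall>x\<in>S. norm x \<le> B" by (auto simp: bounded_iff)
  have "norm (c + k * (z - d)) \<le> norm c + norm k * (B + norm d)" if "z \<in> S" for z
  proof -
    have "norm (c + k * (z - d)) \<le> norm c + norm k * norm (z - d)"
      by (metis norm_mult norm_triangle_ineq)
    also have "norm (z - d) \<le> B + norm d" using B that norm_triangle_ineq4[of z d] by force
    then have "norm k * norm (z - d) \<le> norm k * (B + norm d)" by (simp add: mult_left_mono)
    finally show ?thesis by simp
  qed
  then show ?thesis unfolding bounded_iff by blast
qed

lemma seg:
  assumes "convex C" "Complex a1 (sqrt 3 * b1) \<in> C" "Complex a2 (sqrt 3 * b2) \<in> C" "0 \<le> u" "u \<le> 1"
  shows "Complex ((1-u)*a1+u*a2) (sqrt 3 * ((1-u)*b1+u*b2)) \<in> C"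
proof -
  have "(1-u) *\<^sub>R Complex a1 (sqrt 3 * b1) + u *\<^sub>R Complex a2 (sqrt 3 * b2) \<in> C"
    using assms unfolding convex_alt by blast
  moreover have "(1-u) *\<^sub>R Complex a1 (sqrt 3 * b1) + u *\<^sub>R Complex a2 (sqrt 3 * b2)
     = Complex ((1-u)*a1+u*a2) (sqrt 3 * ((1-u)*b1+u*b2))"
    by (simp add: complex_eq_iff algebra_simps)
  ultimately show ?thesis by simp
qed

lemma hex_in:
  assumes a0: "0 \<le> a" and a1: "a \<le> 1/2" and h1: "0 \<le> Y" and h2: "x + Y \<le> 1/2"
    and h3: "Y - x \<le> 1/2" and h4: "Y \<le> (1-a)/2" and h5: "a - 1/2 \<le> x + Y"
    and h6: "a - 1/2 \<le> Y - x"
  shows "Complex x (sqrt 3 * Y) \<in> Omega_hex a"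
proof -
  let ?C = "Omega_hex a"
  have cv: "convex ?C" unfolding Omega_hex_def by (rule convex_convex_hull)
  have V1: "Complex (a/2) (sqrt 3 * ((1-a)/2)) \<in> ?C"
    unfolding Omega_hex_def pt_def by (rule hull_subset[THEN subsetD]) simp
  have V3: "Complex (1/2-a) (sqrt 3 * 0) \<in> ?C"
    unfolding Omega_hex_def pt_def by (rule hull_subset[THEN subsetD]) simp
  have V4: "Complex (-(1/2-a)) (sqrt 3 * 0) \<in> ?C"
    unfolding Omega_hex_def pt_def by (rule hull_subset[THEN subsetD]) simp
  have V2: "Complex (-(a/2)) (sqrt 3 * ((1-a)/2)) \<in> ?C"
    unfolding Omega_hex_def pt_def by (rule hull_subset[THEN subsetD]) simp
  have V5: "Complex ((1-a)/2) (sqrt 3 * (a/2)) \<in> ?C"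
    unfolding Omega_hex_def pt_def by (rule hull_subset[THEN subsetD]) simp
  have V6: "Complex (-((1-a)/2)) (sqrt 3 * (a/2)) \<in> ?C"
    unfolding Omega_hex_def pt_def by (rule hull_subset[THEN subsetD]) simp
  define w where "w = (if Y \<le> a/2 then 1/2 - a + Y else 1/2 - Y)"
  have E: "Complex w (sqrt 3 * Y) \<in> ?C \<and> Complex (-w) (sqrt 3 * Y) \<in> ?C"
  proof (cases "Y \<le> a/2")
    case True
    show ?thesis
    proof (cases "a = 0")
      case True
      with \<open>Y \<le> a/2\<close> h1 have "Y = 0" by simp
      then show ?thesis using V3 V4 True by (simp add: w_def)
    next
      case False
      define t where "t = 2*Y/a"
      have t0: "0 \<le> t" "t \<le> 1" using h1 \<open>Y \<le> a/2\<close> a0 False by (auto simp: t_def field_simps)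
      have ta: "t * a = 2*Y" using False by (simp add: t_def)
      have m1: "Complex ((1-t)*(1/2-a)+t*((1-a)/2)) (sqrt 3 * ((1-t)*0+t*(a/2))) \<in> ?C"
        by (rule seg[OF cv V3 V5 t0])
      have e1: "(1-t)*(1/2-a)+t*((1-a)/2) = w" and e2: "(1-t)*0+t*(a/2) = Y"
        using ta \<open>Y \<le> a/2\<close> by (auto simp: w_def field_simps)
      have m2: "Complex ((1-t)*(-(1/2-a))+t*(-((1-a)/2))) (sqrt 3 * ((1-t)*0+t*(a/2))) \<in> ?C"
        by (rule seg[OF cv V4 V6 t0])
      have e3: "(1-t)*(-(1/2-a))+t*(-((1-a)/2)) = -w"
      proof -
        have "w = 1/2 - a + Y" using \<open>Y \<le> a/2\<close> by (simp add: w_def)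
        moreover have "(1-t)*(-(1/2-a))+t*(-((1-a)/2)) = -(1/2-a) - (t*a)/2"
          by (simp add: field_simps)
        ultimately show ?thesis using ta by simp
      qed
      show ?thesis using m1 m2 unfolding e1 e2 e3 by simp
    qed
  next
    case False
    then have aa: "a < 1/2" using h4 by simp
    define t where "t = (2*Y - a)/(1-2*a)"
    have t0: "0 \<le> t" "t \<le> 1" using False aa h4 by (auto simp: t_def field_simps)
    have ta: "t * (1-2*a) = 2*Y - a" using aa by (simp add: t_def)
    have m1: "Complex ((1-t)*((1-a)/2)+t*(a/2)) (sqrt 3 * ((1-t)*(a/2)+t*((1-a)/2))) \<in> ?C"
      by (rule seg[OF cv V5 V1 t0])
    have w': "w = 1/2 - Y" using False by (simp add: w_def)
    have "(1-t)*((1-a)/2)+t*(a/2) = (1-a)/2 - (t*(1-2*a))/2" by (simp add: field_simps)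
    then have e1: "(1-t)*((1-a)/2)+t*(a/2) = w" using ta w' by (simp add: field_simps)
    have "(1-t)*(a/2)+t*((1-a)/2) = a/2 + (t*(1-2*a))/2" by (simp add: field_simps)
    then have e2: "(1-t)*(a/2)+t*((1-a)/2) = Y" using ta by (simp add: field_simps)
    have m2: "Complex ((1-t)*(-((1-a)/2))+t*(-(a/2))) (sqrt 3 * ((1-t)*(a/2)+t*((1-a)/2))) \<in> ?C"
      by (rule seg[OF cv V6 V2 t0])
    have "(1-t)*(-((1-a)/2))+t*(-(a/2)) = -((1-t)*((1-a)/2)+t*(a/2))" by (simp add: algebra_simps)
    then have e3: "(1-t)*(-((1-a)/2))+t*(-(a/2)) = -w" using e1 by simp
    show ?thesis using m1 m2 unfolding e1 e2 e3 by simp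
  qed
  have xw: "x \<le> w" "-x \<le> w" using h2 h3 h5 h6 by (auto simp: w_def)
  show ?thesis
  proof (cases "w = 0")
    case True
    then have "x = 0" using xw by simp
    then show ?thesis using E True by simp
  next
    case False
    then have wp: "w > 0" using xw by simp
    define u where "u = (x + w)/(2*w)"
    have u0: "0 \<le> u" "u \<le> 1" using xw wp by (auto simp: u_def field_simps)
    have "Complex ((1-u)*(-w)+u*w) (sqrt 3 * ((1-u)*Y+u*Y)) \<in> ?C"
      using seg[OF cv _ _ u0] E by blast
    moreover have "(1-u)*(-w)+u*w = x" using wp by (simp add: u_def field_simps)
    moreover have "(1-u)*Y+u*Y = Y" by (simp add: algebra_simps)
    ultimately show ?thesis by simp
  qed
qed


lemma T_sym_closure:
  assumes "T_symmetric S"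
  shows "R1 ` closure S \<subseteq> closure S" "R2 ` closure S \<subseteq> closure S" "R3 ` closure S \<subseteq> closure S"
  using assms unfolding T_symmetric_def symmetric_wrt_def
  by (simp_all add: sym_closure cont_R)

lemma mid_R1:
  assumes "convex K" "z \<in> K" "R1 z \<in> K"
  shows "Complex 0 (Im z) \<in> K"
proof -
  have "(1 - 1/2) *\<^sub>R z + (1/2) *\<^sub>R R1 z \<in> K"
    using assms(2,3) assms(1)[unfolded convex_alt, rule_format, of z "R1 z" "1/2"] by simp
  moreover have "(1 - 1/2) *\<^sub>R z + (1/2::real) *\<^sub>R R1 z = Complex 0 (Im z)"
    by (simp add: complex_eq_iff)
  ultimately show ?thesis by simp
qed

lemma core:
  assumes cvx: "convex S" and sym: "T_symmetric S"
    and b1: "\<forall>z\<in>closure S. g1 z \<le> 1/6" and z1: "z1 \<in> closure S" "g1 z1 = 1/6"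
    and b2: "\<forall>z\<in>closure S. - g1 z \<le> r" and z2: "z2 \<in> closure S" "- g1 z2 = r"
    and r: "1/6 \<le> r" "r \<le> 1/3"
  shows "S \<in> class_C (2/3 - 2*r)"
proof -
  define a where "a = 2/3 - 2*r"
  let ?K = "closure S"
  have cK: "convex ?K" using cvx by (rule convex_closure)
  note symK = T_sym_closure[OF sym]
  have P1: "Complex 0 (Im z1) \<in> ?K" using mid_R1[OF cK z1(1)] symK z1 by blast
  have Q1: "Complex 0 (Im z2) \<in> ?K" using mid_R1[OF cK z2(1)] symK z2 by blast
  have i1: "Im z1 = 0" using z1(2) by (simp add: g1_def)
  have i2: "Im z2 = sqrt 3 * (1/6 + r)" using z2(2) by (simp add: g1_def field_simps)
  have H1: "pt 0 0 \<in> ?K" using P1 i1 by (simp add: pt_def)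
  have H2: "pt (1/4) (sqrt 3/4) \<in> ?K"
  proof -
    have "R3 (Complex 0 (Im z1)) \<in> ?K" using P1 symK by blast
    moreover have "R3 (Complex 0 (Im z1)) = pt (1/4) (sqrt 3/4)" using i1 by (simp add: pt_def complex_eq_iff)
    ultimately show ?thesis by simp
  qed
  have H3: "pt (-(1/4)) (sqrt 3/4) \<in> ?K"
  proof -
    have "R2 (Complex 0 (Im z1)) \<in> ?K" using P1 symK by blast
    moreover have "R2 (Complex 0 (Im z1)) = pt (-(1/4)) (sqrt 3/4)" using i1 by (simp add: pt_def complex_eq_iff)
    ultimately show ?thesis by simp
  qed
  have H4: "pt 0 (sqrt 3 / 2 * (1 - a)) \<in> ?K"
    using Q1 i2 by (simp add: pt_def a_def field_simps)
  have H5: "pt (1/2 - 3/4 * a) (sqrt 3 / 4 * a) \<in> ?K"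
  proof -
    have "R2 (Complex 0 (Im z2)) \<in> ?K" using Q1 symK by blast
    moreover have "R2 (Complex 0 (Im z2)) = pt (1/2 - 3/4 * a) (sqrt 3 / 4 * a)"
      by (simp add: i2 pt_def complex_eq_iff a_def field_simps s3sq2)
    ultimately show ?thesis by simp
  qed
  have H6: "pt (-(1/2 - 3/4 * a)) (sqrt 3 / 4 * a) \<in> ?K"
  proof -
    have "R3 (Complex 0 (Im z2)) \<in> ?K" using Q1 symK by blast
    moreover have "R3 (Complex 0 (Im z2)) = pt (-(1/2 - 3/4 * a)) (sqrt 3 / 4 * a)"
      by (simp add: i2 pt_def complex_eq_iff a_def field_simps s3sq2)
    ultimately show ?thesis by simp
  qed
  have HK: "H_hex a \<subseteq> ?K"
    unfolding H_hex_def by (rule hull_minimal) (use H1 H2 H3 H4 H5 H6 cK in auto)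
  have KO: "?K \<subseteq> Omega_hex a"
  proof
    fix z assume zK: "z \<in> ?K"
    define x where "x = Re z"
    define Y where "Y = Im z / sqrt 3"
    have zz: "z = Complex x (sqrt 3 * Y)" by (simp add: x_def Y_def complex_eq_iff)
    have R3z: "R3 z \<in> ?K" and R2z: "R2 z \<in> ?K" using zK symK by blast+
    have c1: "g1 z \<le> 1/6" "g1 (R3 z) \<le> 1/6" "g1 (R2 z) \<le> 1/6"
      using b1 zK R3z R2z by blast+
    have c2: "- g1 z \<le> r" "- g1 (R3 z) \<le> r" "- g1 (R2 z) \<le> r"
      using b2 zK R3z R2z by blast+
    have gz: "g1 z = 1/6 - Y" by (simp add: g1_def Y_def)
    have g3: "g1 (R3 z) = (x + Y)/2 - 1/12" by (simp add: g1_R3 x_def Y_def)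
    have g2: "g1 (R2 z) = (Y - x)/2 - 1/12" by (simp add: g1_R2 x_def Y_def)
    show "z \<in> Omega_hex a" unfolding zz
      using c1 c2 r unfolding gz g2 g3 a_def
      apply -
      apply (rule hex_in)
      by (simp_all only: add_divide_distrib diff_divide_distrib; linarith)+
  qed
  show ?thesis unfolding class_C_def a_def[symmetric] using cvx sym HK KO by blast
qed


lemma cont_g1: "continuous_on A g1"
  unfolding g1_def by (intro continuous_intros) auto

lemma cont_M: "continuous_on A (M m)"
  unfolding M_def by (intro continuous_intros)

lemma g1_sum: "g1 z + g1 (R2 z) + g1 (R3 z) = 0"
  by (simp add: g1_R2 g1_R3 g1_def field_simps)

lemma transfer:
  fixes S :: "complex set"
  assumes bd: "bounded S" and m: "m \<noteq> 0"
    and A1: "\<forall>z\<in>closure S. m * g1 z \<le> 1/6" and A2: "p1 \<in> closure S" "m * g1 p1 = 1/6"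
    and A3: "\<forall>z\<in>closure S. - (m * g1 z) \<le> r" and A4: "p2 \<in> closure S" "- (m * g1 p2) = r"
    and r: "1/6 \<le> r" "r \<le> 1/3"
  shows "\<exists>m r z1 z2. m \<noteq> 0 \<and> (\<forall>z\<in>closure (M m ` S). g1 z \<le> 1/6) \<and> z1 \<in> closure (M m ` S) \<and> g1 z1 = 1/6
     \<and> (\<forall>z\<in>closure (M m ` S). - g1 z \<le> r) \<and> z2 \<in> closure (M m ` S) \<and> - g1 z2 = r \<and> 1/6 \<le> r \<and> r \<le> 1/3"
proof -
  have CL1: "M m ` closure S \<subseteq> closure (M m ` S)"
    by (rule image_closure_subset[OF cont_M closed_closure closure_subset])
  have "compact (M m ` closure S)" using bd by (intro compact_continuous_image cont_M) simp
  then have "closed (M m ` closure S)" by (rule compact_imp_closed)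
  then have CL2: "closure (M m ` S) \<subseteq> M m ` closure S"
    by (intro closure_minimal) (use closure_subset in blast)+
  have B1: "\<forall>z\<in>closure (M m ` S). g1 z \<le> 1/6" using CL2 A1 g1_M by fastforce
  have B2: "\<forall>z\<in>closure (M m ` S). - g1 z \<le> r" using CL2 A3 g1_M by fastforce
  have B3: "M m p1 \<in> closure (M m ` S)" "g1 (M m p1) = 1/6" using CL1 A2 g1_M by auto
  have B4: "M m p2 \<in> closure (M m ` S)" "- g1 (M m p2) = r" using CL1 A4 g1_M by auto
  show ?thesis using m B1 B2 B3 B4 r by blast
qed

lemma normalize:
  fixes S :: "complex set"
  assumes cvx: "convex S" and bd: "bounded S" and sym: "T_symmetric S"
    and uv: "u \<in> S" "v \<in> S" "u \<noteq> v"
  shows "\<exists>m r z1 z2. m \<noteq> 0 \<and> (\<forall>z\<in>closure (M m ` S). g1 z \<le> 1/6) \<and> z1 \<in> closure (M m ` S) \<and> g1 z1 = 1/6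
     \<and> (\<forall>z\<in>closure (M m ` S). - g1 z \<le> r) \<and> z2 \<in> closure (M m ` S) \<and> - g1 z2 = r \<and> 1/6 \<le> r \<and> r \<le> 1/3"
proof -
  let ?K = "closure S"
  have cK: "compact ?K" using bd by simp
  have nK: "?K \<noteq> {}" using uv closure_subset by blast
  obtain p1 where p1: "p1 \<in> ?K" "\<forall>y\<in>?K. g1 y \<le> g1 p1"
    using continuous_attains_sup[OF cK nK cont_g1] by blast
  obtain p2 where p2: "p2 \<in> ?K" "\<forall>y\<in>?K. - g1 y \<le> - g1 p2"
    using continuous_attains_sup[OF cK nK, of "\<lambda>z. - g1 z"] cont_g1
    by (metis continuous_on_minus)
  define H where "H = g1 p1"
  define Hm where "Hm = - g1 p2"
  note symK = T_sym_closure[OF sym]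
  have RK: "R2 z \<in> ?K" "R3 z \<in> ?K" if "z \<in> ?K" for z using symK that by blast+
  have Hm2: "Hm \<le> 2*H"
  proof -
    have "g1 (R2 p2) \<le> H" "g1 (R3 p2) \<le> H" using p1 RK[OF p2(1)] by (auto simp: H_def)
    then show ?thesis using g1_sum[of p2] by (simp add: Hm_def)
  qed
  have H2: "H \<le> 2*Hm"
  proof -
    have "- g1 (R2 p1) \<le> Hm" "- g1 (R3 p1) \<le> Hm" using p2 RK[OF p1(1)] by (auto simp: Hm_def)
    then show ?thesis using g1_sum[of p1] by (simp add: H_def)
  qed
  have Hpos: "H > 0"
  proof (rule ccontr)
    assume "\<not> H > 0"
    then have H0: "H \<le> 0" by simp
    have "z = c0" if "z \<in> ?K" for z
    proof -
      have "g1 z \<le> 0" "g1 (R2 z) \<le> 0" "g1 (R3 z) \<le> 0"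
        using p1(2) RK[OF that] that H0 unfolding H_def by fastforce+
      then have e: "g1 z = 0" "g1 (R2 z) = 0" "g1 (R3 z) = 0" using g1_sum[of z] by linarith+
      from e(1) have "Im z = sqrt 3 / 6" by (simp add: g1_def field_simps)
      moreover from e(2,3) have "Re z = 0" unfolding g1_R2 g1_R3 by (simp add: field_simps)
      ultimately show ?thesis by (simp add: c0_def complex_eq_iff)
    qed
    then show False using uv closure_subset by blast
  qed
  have Hmpos: "Hm > 0" using Hpos H2 by simp
  show ?thesis
  proof (cases "H \<le> Hm")
    case True
    define m where "m = 1/(6*H)"
    show ?thesis
    proof (rule transfer[OF bd, of m p1 "Hm/(6*H)" p2])
      show "m \<noteq> 0" using Hpos by (simp add: m_def)
      show "p1 \<in> ?K" "p2 \<in> ?K" by (fact p1(1), fact p2(1))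
      show "m * g1 p1 = 1/6" using Hpos by (simp add: m_def H_def[symmetric])
      show "- (m * g1 p2) = Hm/(6*H)" by (simp add: m_def Hm_def)
      show "\<forall>z\<in>?K. m * g1 z \<le> 1/6"
      proof
        fix z assume "z \<in> ?K"
        then have "g1 z \<le> H" using p1 H_def by blast
        then show "m * g1 z \<le> 1/6" using Hpos by (simp add: m_def field_simps)
      qed
      show "\<forall>z\<in>?K. - (m * g1 z) \<le> Hm/(6*H)"
      proof
        fix z assume "z \<in> ?K"
        then have "- g1 z \<le> Hm" using p2 Hm_def by blast
        then show "- (m * g1 z) \<le> Hm/(6*H)" using Hpos by (simp add: m_def field_simps)
      qed
      show "1/6 \<le> Hm/(6*H)" "Hm/(6*H) \<le> 1/3" using True Hm2 Hpos by (simp_all add: field_simps)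
    qed
  next
    case False
    define m where "m = -1/(6*Hm)"
    show ?thesis
    proof (rule transfer[OF bd, of m p2 "H/(6*Hm)" p1])
      show "m \<noteq> 0" using Hmpos by (simp add: m_def)
      show "p2 \<in> ?K" "p1 \<in> ?K" by (fact p2(1), fact p1(1))
      show "m * g1 p2 = 1/6" using Hmpos by (simp add: m_def Hm_def field_simps)
      show "- (m * g1 p1) = H/(6*Hm)" by (simp add: m_def H_def)
      show "\<forall>z\<in>?K. m * g1 z \<le> 1/6"
      proof
        fix z assume "z \<in> ?K"
        then have "- g1 z \<le> Hm" using p2 Hm_def by blast
        then show "m * g1 z \<le> 1/6" using Hmpos by (simp add: m_def field_simps)
      qed
      show "\<forall>z\<in>?K. - (m * g1 z) \<le> H/(6*Hm)"
      proof
        fix z assume "z \<in> ?K"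
        then have "g1 z \<le> H" using p1 H_def by blast
        then show "- (m * g1 z) \<le> H/(6*Hm)" using Hmpos by (simp add: m_def field_simps)
      qed
      show "1/6 \<le> H/(6*Hm)" "H/(6*Hm) \<le> 1/3" using False H2 Hmpos by (simp_all add: field_simps)
    qed
  qed
qed


lemma image_conj:
  assumes "\<And>z. f (g z) = g (h z)" "h ` S = S"
  shows "f ` (g ` S) = g ` S"
proof -
  have "f ` (g ` S) = g ` (h ` S)" using assms(1) by (simp add: image_image)
  then show ?thesis using assms(2) by simp
qed

lemma conj_refl:
  "refl_dir c0 (t + (pi/6 - th)) (c0 + cis (pi/6 - th) * (z - p))
     = c0 + cis (pi/6 - th) * (refl_dir p t z - p)"
proof -
  have "cis (2 * (t + (pi/6 - th))) * cnj (cis (pi/6 - th)) = cis (pi/6 - th) * cis (2*t)"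
    by (simp add: cis_cnj cis_mult algebra_simps)
  then show ?thesis unfolding refl_dir_def
    by (simp add: algebra_simps complex_cnj_mult)
qed

theorem mainTheorem14:
  fixes \<Omega> :: "complex set"
  assumes "bounded \<Omega>" and "convex \<Omega>" and "interior \<Omega> \<noteq> {}"
    and "triangle_symmetric \<Omega>"
  shows "\<exists>a \<rho> h. 0 \<le> a \<and> a \<le> 1/3 \<and> rigid_motion \<rho> \<and> homothety h \<and>
           (\<rho> \<circ> h) ` \<Omega> \<in> class_C a"
proof -
  obtain p th where sy: "symmetric_wrt (refl_dir p th) \<Omega>"
    "symmetric_wrt (refl_dir p (th + pi/3)) \<Omega>" "symmetric_wrt (refl_dir p (th + 2*pi/3)) \<Omega>"
    using assms(4) unfolding triangle_symmetric_def by blast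
  define e where "e = cis (pi/6 - th)"
  define \<rho>0 where "\<rho>0 = (\<lambda>z. c0 + e * (z - p))"
  define S1 where "S1 = \<rho>0 ` \<Omega>"
  have cj: "refl_dir c0 (t + (pi/6 - th)) (\<rho>0 z) = \<rho>0 (refl_dir p t z)" for t z
    unfolding \<rho>0_def e_def by (rule conj_refl)
  have s1: "R2 ` S1 = S1"
  proof -
    have eq: "th + (pi/6 - th) = pi/6" by simp
    have "R2 (\<rho>0 z) = \<rho>0 (refl_dir p (th) z)" for z
      using cj[of "th" z] unfolding eq refl_dir_R .
    then show ?thesis unfolding S1_def
      by (rule image_conj) (use sy(1) in \<open>simp add: symmetric_wrt_def\<close>)
  qed
  have s2: "R1 ` S1 = S1"
  proof -
    have eq: "th + pi/3 + (pi/6 - th) = pi/2" by simp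
    have "R1 (\<rho>0 z) = \<rho>0 (refl_dir p (th + pi/3) z)" for z
      using cj[of "th + pi/3" z] unfolding eq refl_dir_R .
    then show ?thesis unfolding S1_def
      by (rule image_conj) (use sy(2) in \<open>simp add: symmetric_wrt_def\<close>)
  qed
  have s3: "R3 ` S1 = S1"
  proof -
    have eq: "th + 2*pi/3 + (pi/6 - th) = 5*pi/6" by simp
    have "R3 (\<rho>0 z) = \<rho>0 (refl_dir p (th + 2*pi/3) z)" for z
      using cj[of "th + 2*pi/3" z] unfolding eq refl_dir_R .
    then show ?thesis unfolding S1_def
      by (rule image_conj) (use sy(3) in \<open>simp add: symmetric_wrt_def\<close>)
  qed
  have symS1: "T_symmetric S1" using s1 s2 s3 by (simp add: T_symmetric_def symmetric_wrt_def)
  have cvS1: "convex S1" unfolding S1_def \<rho>0_def by (rule convex_lin[OF assms(2)])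
  have bdS1: "bounded S1" unfolding S1_def \<rho>0_def by (rule bounded_lin[OF assms(1)])
  have e0: "e \<noteq> 0" by (simp add: e_def)
  obtain x where x: "x \<in> interior \<Omega>" using assms(3) by blast
  then obtain \<epsilon> where \<epsilon>: "\<epsilon> > 0" "ball x \<epsilon> \<subseteq> interior \<Omega>"
    using open_contains_ball open_interior by blast
  define y where "y = x + of_real (\<epsilon>/2)"
  have "dist x y < \<epsilon>" using \<epsilon>(1) by (simp add: y_def dist_norm)
  then have yO: "y \<in> \<Omega>" using \<epsilon>(2) interior_subset by (auto simp: ball_def)
  have xO: "x \<in> \<Omega>" using x interior_subset by blast
  have "\<rho>0 x \<noteq> \<rho>0 y" using e0 \<epsilon>(1) by (simp add: \<rho>0_def y_def)
  then obtain m r z1 z2 where N: "m \<noteq> 0" "\<forall>z\<in>closure (M m ` S1). g1 z \<le> 1/6" "z1 \<in> closure (M m ` S1)" "g1 z1 = 1/6"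
     "\<forall>z\<in>closure (M m ` S1). - g1 z \<le> r" "z2 \<in> closure (M m ` S1)" "- g1 z2 = r" "1/6 \<le> r" "r \<le> 1/3"
    using normalize[OF cvS1 bdS1 symS1, of "\<rho>0 x" "\<rho>0 y"] xO yO unfolding S1_def by blast
  have cv2: "convex (M m ` S1)" unfolding M_def by (rule convex_lin[OF cvS1])
  have C: "M m ` S1 \<in> class_C (2/3 - 2*r)"
    by (rule core[OF cv2 T_symmetric_M[OF symS1] N(2-9)])
  define \<rho> where "\<rho> = (\<lambda>w. c0 + e * (w - p))"
  define h where "h = (\<lambda>z. p + of_real m * (z - p))"
  have rig: "rigid_motion \<rho>"
    unfolding rigid_motion_def \<rho>_def
    by (simp add: dist_norm norm_mult e_def right_diff_distrib[symmetric])
  have hom: "homothety h" unfolding homothety_def h_def using N(1) by blast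
  have "(\<rho> \<circ> h) ` \<Omega> = M m ` S1"
    unfolding S1_def image_image \<rho>_def h_def \<rho>0_def M_def comp_def
    by (rule image_cong) (simp_all add: algebra_simps)
  then show ?thesis using C rig hom N(8,9)
    by (intro exI[of _ "2/3 - 2*r"] exI[of _ \<rho>] exI[of _ h]) auto
qed

end
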